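(* Let $R$ be a commutative ring, let $n=2^m$ with $m\ge 0$, and let $A=\sum_{i=0}^{n-1}a_ix^i$ and $B=\sum_{i=0}^{n-1}b_ix^i$ be polynomials in $R[x]$. Consider the recursion tree for the product $AB$ built with the interleaved splitting scheme (described in the context). Let $K$ be a direct leaf node, reached from the root by the path with labels $d_1d_2\dots d_m$, where every $d_i\in\{0,1\}$ ($d_1$ is the label of the edge leaving the root). Then the contribution of $K$ is $$\frac{1-x^{2^m}}{1-x}\,a_r b_r\,x^r,\qquad\text{where } r=\sum_{i=1}^m d_i 2^{i-1},$$ i.e. $r$ is the integer whose binary expansion is $d_m d_{m-1}\dots d_2d_1$. Here $\frac{1-x^{2^m}}{1-x}$ denotes the polynomial $1+x+\dots+x^{2^m-1}$.
   Context: Recursion tree. Each node carries a triple $(P,Q,X)$, where $X=x^{2^{i}}$ at depth $i$ and $P,Q$ are polynomials in $X$; the root is $(A,B,x)$. For a node $(P,Q,X)$ at depth $i<m$, write $P=P_1X+P_0$ and $Q=Q_1X+Q_0$, where $P_0,P_1,Q_0,Q_1$ are polynomials in $X^2$ (interleaved splitting: $P_0$ collects the monomials of $P$ whose exponent in $X$ is even, $P_1X$ those whose exponent is odd). Using the identity $PQ=(X+1)P_0Q_0+X(X+1)P_1Q_1-X(P_1-P_0)(Q_1-Q_0)$, the node has three children: the edge labelled 0 leads to $(P_0,Q_0,X^2)$ with edge weight $X+1$; the edge labelled 1 leads to $(P_1,Q_1,X^2)$ with edge weight $X(X+1)$; the edge labelled 2 leads to $(P_1-P_0,Q_1-Q_0,X^2)$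 with edge weight $-X$. Nodes at depth $m$ are leaves; their $P,Q$ are constants. The contribution of a leaf is the product of the edge weights along the path from the root to it, multiplied by the product $PQ$ of the two constants it carries. $AB$ is the sum of the contributions of all leaves. A node is direct if the path from the root to it contains no edge labelled 2. *)

theory Defs
  imports "HOL-Computational_Algebra.Polynomial"
begin

text \<open>A node polynomial P is stored as a polynomial in its own variable X
  (X = x^(2^i) at depth i). Interleaved splitting P = P1 X + P0 with P0, P1
  polynomials in X^2; these are stored as polynomials in the variable X^2.\<close>

definition even_part :: "'a::comm_ring_1 poly \<Rightarrow> 'a poly" where
  "even_part P = (\<Sum>k\<le>degree P. monom (coeff P (2*k)) k)"

definition odd_part :: "'a::comm_ring_1 poly \<Rightarrow> 'a poly" where
  "odd_part P = (\<Sum>k\<le>degree P. monom (coeff P (2*k+1)) k)"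

definition child :: "nat \<Rightarrow> 'a::comm_ring_1 poly \<times> 'a poly \<Rightarrow> 'a poly \<times> 'a poly" where
  "child d PQ = (let (P, Q) = PQ in
     if d = 0 then (even_part P, even_part Q)
     else if d = 1 then (odd_part P, odd_part Q)
     else (odd_part P - even_part P, odd_part Q - even_part Q))"

definition edge_weight :: "nat \<Rightarrow> nat \<Rightarrow> 'a::comm_ring_1 poly" where
  "edge_weight i d = (let X = monom 1 (2^i) :: 'a poly in
     if d = 0 then X + 1 else if d = 1 then X * (X + 1) else - X)"

fun path_node :: "('a::comm_ring_1 poly \<times> 'a poly) \<Rightarrow> nat list \<Rightarrow> 'a poly \<times> 'a poly" where
  "path_node PQ [] = PQ"
| "path_node PQ (d # ds) = path_node (child d PQ) ds"

fun path_weight :: "nat \<Rightarrow> nat list \<Rightarrow> 'a::comm_ring_1 poly" where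
  "path_weight i [] = 1"
| "path_weight i (d # ds) = edge_weight i d * path_weight (Suc i) ds"

text \<open>Contribution of the leaf reached from root (A,B,x) along labels ds (ds!0 = d_1).\<close>
definition contribution :: "'a::comm_ring_1 poly \<Rightarrow> 'a poly \<Rightarrow> nat list \<Rightarrow> 'a poly" where
  "contribution A B ds = path_weight 0 ds * (case path_node (A, B) ds of (P, Q) \<Rightarrow> P * Q)"

end

theory Submission
  imports Defs
begin

fun rv :: "nat list \<Rightarrow> nat" where
  "rv [] = 0"
| "rv (d # ds) = d + 2 * rv ds"

lemma rv_sum: "(\<Sum>i<length ds. ds ! i * 2^i) = rv ds"
proof (induction ds)
  case Nil then show ?case by simp
next
  case (Cons d ds)
  have "(\<Sum>i<length (d#ds). (d#ds) ! i * 2^i) = d + (\<Sum>i<length ds. ds ! i * 2^(Suc i))"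
    by (simp add: sum.lessThan_Suc_shift del: sum.lessThan_Suc)
  also have "\<dots> = d + 2 * (\<Sum>i<length ds. ds ! i * 2^i)"
    by (simp add: sum_distrib_left mult_ac)
  finally show ?case using Cons by simp
qed

lemma coeff_even_part: "coeff (even_part P) k = coeff P (2*k)"
proof -
  have "coeff (even_part P) k = (\<Sum>j\<le>degree P. if k = j then coeff P (2*j) else 0)"
    unfolding even_part_def coeff_sum by (simp add: coeff_monom)
  also have "\<dots> = (if k \<le> degree P then coeff P (2*k) else 0)"
    by (simp add: sum.delta)
  also have "\<dots> = coeff P (2*k)"
    by (auto intro: coeff_eq_0)
  finally show ?thesis .
qed

lemma coeff_odd_part: "coeff (odd_part P) k = coeff P (2*k+1)"
proof -
  have "coeff (odd_part P) k = (\<Sum>j\<le>degree P. if k = j then coeff P (2*j+1) else 0)"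
    unfolding odd_part_def coeff_sum by (simp add: coeff_monom)
  also have "\<dots> = (if k \<le> degree P then coeff P (2*k+1) else 0)"
    by (simp add: sum.delta)
  also have "\<dots> = coeff P (2*k+1)"
    by (auto intro: coeff_eq_0)
  finally show ?thesis .
qed

lemma deg_half:
  assumes "degree P < 2^Suc s" and "\<And>k. coeff R k = coeff P (2*k+d)"
  shows "degree R < 2^s"
proof -
  have "degree R \<le> 2^s - 1"
  proof (rule degree_le, intro allI impI)
    fix i :: nat assume "2^s - 1 < i"
    then have "degree P < 2*i+d" using assms(1) by simp
    then show "coeff R i = 0" using assms(2) by (simp add: coeff_eq_0)
  qed
  then show ?thesis by (metis Suc_pred' le_imp_less_Suc pos2 zero_less_power)
qed

lemma node:
  "length ds = m \<Longrightarrow> set ds \<subseteq> {0,1} \<Longrightarrow> degree P < 2^m \<Longrightarrow> degree Q < 2^m \<Longrightarrow>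
   path_node (P,Q) ds = ([:coeff P (rv ds):], [:coeff Q (rv ds):])"
proof (induction ds arbitrary: P Q m)
  case Nil
  then show ?case using degree_0_id[of P] degree_0_id[of Q] by simp
next
  case (Cons d ds)
  then obtain m' where m: "m = Suc m'" "length ds = m'" by auto
  have d: "d = 0 \<or> d = 1" using Cons by auto
  define C :: "'a poly \<Rightarrow> 'a poly" where "C = (if d = 0 then even_part else odd_part)"
  have cC: "coeff (C R) k = coeff R (2*k+d)" for R k
    using d by (auto simp: C_def coeff_even_part coeff_odd_part)
  have ch: "child d (P,Q) = (C P, C Q)" using d by (auto simp: child_def C_def)
  have "path_node (C P, C Q) ds = ([:coeff (C P) (rv ds):], [:coeff (C Q) (rv ds):])"
    apply (rule Cons.IH[OF m(2)])
    using Cons.prems m deg_half[of P m' "C P" d] deg_half[of Q m' "C Q" d] cC by auto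
  then show ?case using ch cC by (simp add: add.commute)
qed

definition G :: "nat \<Rightarrow> nat \<Rightarrow> 'a::comm_ring_1 poly" where
  "G i n = (\<Prod>j<n. monom 1 (2^(i+j)) + 1)"

lemma weight:
  "set ds \<subseteq> {0,1} \<Longrightarrow> path_weight i ds = monom 1 (2^i * rv ds) * G i (length ds)"
proof (induction ds arbitrary: i)
  case Nil then show ?case by (simp add: G_def monom_0 one_pCons)
next
  case (Cons d ds)
  have d: "d = 0 \<or> d = 1" using Cons by auto
  have G: "G i (Suc (length ds)) = (monom 1 (2^i) + 1) * G (Suc i) (length ds)"
    unfolding G_def by (simp add: prod.lessThan_Suc_shift del: prod.lessThan_Suc)
  have ew: "edge_weight i d = monom 1 (2^i * d) * (monom 1 (2^i) + 1)"
    using d by (auto simp: edge_weight_def Let_def monom_0 one_pCons distrib_left)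
  show ?case using Cons
    by (simp add: ew G mult_monom algebra_simps)
qed

lemma geo: "(\<Sum>j<2^m. monom 1 j) = (G 0 m :: 'a::comm_ring_1 poly)"
proof (induction m)
  case 0 then show ?case by (simp add: G_def monom_0 one_pCons)
next
  case (Suc m)
  have "(\<Sum>j<2^Suc m. monom 1 j :: 'a poly) = (\<Sum>j<2^m. monom 1 j) + (\<Sum>j<2^m. monom 1 (2^m + j))"
  proof -
    have "(\<Sum>j<2^Suc m. monom 1 j :: 'a poly) = (\<Sum>j\<in>{0..<2^m}. monom 1 j) + (\<Sum>j\<in>{2^m..<2^m+2^m}. monom 1 j)"
      by (simp add: mult_2 lessThan_atLeast0 sum.atLeastLessThan_concat)
    also have "(\<Sum>j\<in>{2^m..<2^m+2^m}. monom 1 j :: 'a poly) = (\<Sum>j\<in>{0..<2^m}. monom 1 (j+2^m))"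
      using sum.shift_bounds_nat_ivl[of "monom 1" 0 "2^m" "2^m"] by simp
    finally show ?thesis by (simp add: lessThan_atLeast0 add.commute)
  qed
  also have "\<dots> = (monom 1 (2^m) + 1) * (\<Sum>j<2^m. monom 1 j)"
    by (simp add: distrib_right sum_distrib_left mult_monom sum.distrib)
  finally show ?case using Suc by (simp add: G_def mult_ac)
qed

theorem lemma1:
  fixes A B :: "'a::comm_ring_1 poly" and m :: nat and ds :: "nat list"
  assumes "degree A < 2^m" and "degree B < 2^m"
    and "length ds = m" and "set ds \<subseteq> {0, 1}"
  shows "contribution A B ds =
    (\<Sum>j<2^m. monom 1 j) *
    monom (coeff A (\<Sum>i<m. ds ! i * 2^i) * coeff B (\<Sum>i<m. ds ! i * 2^i)) (\<Sum>i<m. ds ! i * 2^i)"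
proof -
  have r: "(\<Sum>i<m. ds ! i * 2^i) = rv ds" using rv_sum[of ds] assms(3) by simp
  show ?thesis
    unfolding contribution_def r geo
  proof -
    have w: "path_weight 0 ds = monom 1 (rv ds) * G 0 m" using weight[OF assms(4), of 0] assms(3) by simp
    have "path_weight 0 ds * monom (coeff A (rv ds) * coeff B (rv ds)) 0 = G 0 m * monom (coeff A (rv ds) * coeff B (rv ds)) (rv ds)"
      unfolding w by (metis (no_types, lifting) mult.assoc mult.commute mult_monom add_0_right mult_1)
    then show "path_weight 0 ds * (case path_node (A, B) ds of (P, Q) \<Rightarrow> P * Q) = G 0 m * monom (coeff A (rv ds) * coeff B (rv ds)) (rv ds)"
      using node[OF assms(3,4,1,2)] by (simp add: monom_0[symmetric] mult_monom)
  qed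
qed

end
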